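(* Assume $b<0$ and $a>0$, and let $(J,E)\in D_1$. Then, as $E\to E_+(J)$, \[ \lim_{E\to E_+(J)}T(J,E)=+\infty,\qquad \lim_{E\to E_+(J)}\tilde M(J,E)=+\infty,\qquad \lim_{E\to E_+(J)}\frac{\tilde M(J,E)}{T(J,E)}=\frac{q^2-a}{2b}, \] \[ \lim_{E\to E_+(J)}\tilde P(J,E)=+\infty,\qquad \lim_{E\to E_+(J)}\frac{\tilde P(J,E)}{T(J,E)}=\frac{q(q^2-a)}{2b}. \]
   Context: Consider the profile equation $u_{xx}+au+b|u|^2u=0$ (defocusing case $b<0$, with $a>0$), with conserved angular momentum $J=\Im(u\bar u_x)$ and energy $E=\frac12|u_x|^2+\frac a2|u|^2+\frac b4|u|^4$; without loss of generality $J\ge 0$. Writing $u=re^{i\phi}$, one has $E=\frac{r_x^2}{2}+V_J(r)$ with potential $V_J(r)=\frac{J^2}{2r^2}+a\frac{r^2}{2}+b\frac{r^4}{4}$. For $0<J<\sqrt{\frac{4}{27}\frac{a^3}{b^2}}$, parametrize $J=q\frac{q^2-a}{b}=Q\frac{Q^2-a}{b}$ with $0<q^2<\frac a3<Q^2<a$ ($q,Q$ of the same sign as $J$), and set $E_-(J)=\frac{1}{4b}(Q^2-a)(3Q^2+a)$ (local minimum value of $V_J$) and $E_+(J)=\frac{1}{4b}(q^2-a)(3q^2+a)$ (local maximum value of $V_J$). The domain is $D_1=\{(J,E)\in\mathbb R^2:0<J<\sqrt{\frac{4}{27}\frac{a^3}{b^2}},\ E_-(J)<E<E_+(J)\}$.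 For $(J,E)\in D_1$, let $r_1<r_2<r_3$ be the three positive roots of $E-V_J(r)$, and define the period, mass and momentum of the corresponding solution by $T(J,E)=2\int_{r_1}^{r_2}\frac{dr}{\sqrt{2(E-V_J(r))}}$, $\tilde M(J,E)=\frac12\int_0^{T}|u|^2dx=\int_{r_1}^{r_2}\frac{r^2\,dr}{\sqrt{2(E-V_J(r))}}$, $\tilde P(J,E)=\frac12\Im\int_0^T u\bar u_x\,dx=\frac12 T(J,E)J$. *)

theory Defs
  imports "HOL-Analysis.Analysis"
begin

definition VJ :: "real \<Rightarrow> real \<Rightarrow> real \<Rightarrow> real \<Rightarrow> real" where
  "VJ a b J r = J\<^sup>2 / (2 * r\<^sup>2) + a * r\<^sup>2 / 2 + b * r ^ 4 / 4"

definition roots :: "real \<Rightarrow> real \<Rightarrow> real \<Rightarrow> real \<Rightarrow> real set" where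
  "roots a b J E = {r. r > 0 \<and> E - VJ a b J r = 0}"

text \<open>r1 < r2 are the two smallest positive roots (of the three r1 < r2 < r3).\<close>
definition r1 :: "real \<Rightarrow> real \<Rightarrow> real \<Rightarrow> real \<Rightarrow> real" where
  "r1 a b J E = Min (roots a b J E)"

definition r2 :: "real \<Rightarrow> real \<Rightarrow> real \<Rightarrow> real \<Rightarrow> real" where
  "r2 a b J E = Min (roots a b J E - {r1 a b J E})"

definition period :: "real \<Rightarrow> real \<Rightarrow> real \<Rightarrow> real \<Rightarrow> real" where
  "period a b J E =
     2 * integral {r1 a b J E .. r2 a b J E} (\<lambda>r. 1 / sqrt (2 * (E - VJ a b J r)))"

definition mass :: "real \<Rightarrow> real \<Rightarrow> real \<Rightarrow> real \<Rightarrow> real" where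
  "mass a b J E =
     integral {r1 a b J E .. r2 a b J E} (\<lambda>r. r\<^sup>2 / sqrt (2 * (E - VJ a b J r)))"

definition momentum :: "real \<Rightarrow> real \<Rightarrow> real \<Rightarrow> real \<Rightarrow> real" where
  "momentum a b J E = period a b J E * J / 2"

text \<open>E_+(J) = (q^2 - a)(3 q^2 + a)/(4 b), local maximum value of V_J.\<close>
definition Eplus :: "real \<Rightarrow> real \<Rightarrow> real \<Rightarrow> real" where
  "Eplus a b q = (q\<^sup>2 - a) * (3 * q\<^sup>2 + a) / (4 * b)"

end

theory Submission
  imports Defs
begin


lemma arcsin_int:
  fixes \<alpha> \<beta> :: real assumes ab: "\<alpha> < \<beta>"
  shows "((\<lambda>r. 1 / sqrt ((r - \<alpha>) * (\<beta> - r))) has_integral pi) {\<alpha>..\<beta>}"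
proof -
  define F where "F r = arcsin ((2*r - \<alpha> - \<beta>) / (\<beta> - \<alpha>))" for r
  have "((\<lambda>r. 1 / sqrt ((r - \<alpha>) * (\<beta> - r))) has_integral (F \<beta> - F \<alpha>)) {\<alpha>..\<beta>}"
  proof (rule fundamental_theorem_of_calculus_interior)
    show "\<alpha> \<le> \<beta>" using ab by simp
    have "\<forall>x\<in>{\<alpha>..\<beta>}. -1 \<le> (2*x - \<alpha> - \<beta>) / (\<beta> - \<alpha>) \<and> (2*x - \<alpha> - \<beta>) / (\<beta> - \<alpha>) \<le> 1"
      using ab by (auto simp: divide_simps)
    then show "continuous_on {\<alpha>..\<beta>} F" unfolding F_def
      by (intro continuous_on_arcsin continuous_intros) (use ab in auto)
    fix x assume x: "x \<in> {\<alpha><..<\<beta>}"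
    define u where "u = (2*x - \<alpha> - \<beta>) / (\<beta> - \<alpha>)"
    have u1: "-1 < u" "u < 1" using x ab by (auto simp: u_def divide_simps)
    have eq: "1 - u\<^sup>2 = 4 * ((x - \<alpha>) * (\<beta> - x)) / (\<beta> - \<alpha>)\<^sup>2"
    proof -
      have ne: "\<beta> - \<alpha> \<noteq> 0" using ab by simp
      have "u * (\<beta> - \<alpha>) = 2*x - \<alpha> - \<beta>" using ne by (simp add: u_def)
      then have "(1 - u\<^sup>2) * (\<beta> - \<alpha>)\<^sup>2 = 4 * ((x - \<alpha>) * (\<beta> - x))"
      proof -
        have xe: "x = (u * (\<beta> - \<alpha>) + \<alpha> + \<beta>) / 2" using \<open>u * (\<beta> - \<alpha>) = 2*x - \<alpha> - \<beta>\<close> by simp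
        show ?thesis by (subst xe)+ (simp add: power2_eq_square field_simps)
      qed
      then show ?thesis using ne by (simp add: field_simps)
    qed
    have pos: "(x - \<alpha>) * (\<beta> - x) > 0" using x by auto
    have dg: "((\<lambda>r. (2*r - \<alpha> - \<beta>) / (\<beta> - \<alpha>)) has_real_derivative 2 / (\<beta> - \<alpha>)) (at x)"
    proof -
      have "((\<lambda>r. 2*r - \<alpha> - \<beta>) has_real_derivative 2) (at x)" by (auto intro!: derivative_eq_intros)
      from DERIV_cdivide[OF this, of "\<beta> - \<alpha>"] show ?thesis .
    qed
    have df: "(arcsin has_real_derivative inverse (sqrt (1 - u\<^sup>2))) (at ((\<lambda>r. (2*r - \<alpha> - \<beta>) / (\<beta> - \<alpha>)) x))"
      using DERIV_arcsin[OF u1] by (simp add: u_def)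
    have "(F has_real_derivative inverse (sqrt (1 - u\<^sup>2)) * (2 / (\<beta> - \<alpha>))) (at x)"
      using DERIV_chain2[OF df dg] unfolding F_def by simp
    moreover have "inverse (sqrt (1 - u\<^sup>2)) * (2 / (\<beta> - \<alpha>)) = 1 / sqrt ((x - \<alpha>) * (\<beta> - x))"
    proof -
      have "sqrt (1 - u\<^sup>2) = 2 * sqrt ((x - \<alpha>) * (\<beta> - x)) / (\<beta> - \<alpha>)"
        unfolding eq using ab by (simp add: real_sqrt_divide real_sqrt_mult)
      moreover have "sqrt ((x - \<alpha>) * (\<beta> - x)) > 0" using pos by simp
      ultimately show ?thesis using ab by (simp add: field_simps)
    qed
    ultimately show "(F has_vector_derivative 1 / sqrt ((x - \<alpha>) * (\<beta> - x))) (at x)"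
      by (simp add: has_real_derivative_iff_has_vector_derivative)
  qed
  moreover have "(\<alpha> - \<beta>) / (\<beta> - \<alpha>) = -1" using ab by (simp add: divide_simps)
  then have "F \<beta> - F \<alpha> = pi" using ab by (simp add: F_def)
  ultimately show ?thesis by simp
qed

lemma dominated_int:
  fixes \<alpha> \<beta> C :: real and \<phi> :: "real \<Rightarrow> real"
  assumes ab: "\<alpha> < \<beta>" and cont: "continuous_on {\<alpha><..<\<beta>} \<phi>"
    and bd: "\<And>r. \<alpha> < r \<Longrightarrow> r < \<beta> \<Longrightarrow> \<bar>\<phi> r\<bar> \<le> C / sqrt ((r - \<alpha>) * (\<beta> - r))"
  shows "\<phi> integrable_on {\<alpha>..\<beta>}" "\<bar>integral {\<alpha>..\<beta>} \<phi>\<bar> \<le> C * pi"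
proof -
  have g: "((\<lambda>r. C * (1 / sqrt ((r - \<alpha>) * (\<beta> - r)))) has_integral C * pi) {\<alpha><..<\<beta>}"
    using has_integral_mult_right[OF arcsin_int[OF ab], of C] has_integral_Icc_iff_Ioo by blast
  have i: "\<phi> integrable_on {\<alpha><..<\<beta>}"
    apply (rule measurable_bounded_by_integrable_imp_integrable_real[where g="\<lambda>r. C * (1 / sqrt ((r - \<alpha>) * (\<beta> - r)))"])
    using continuous_imp_measurable_on_sets_lebesgue[OF cont] g bd by auto
  then show "\<phi> integrable_on {\<alpha>..\<beta>}" using integrable_on_Icc_iff_Ioo by blast
  have "norm (integral {\<alpha><..<\<beta>} \<phi>) \<le> integral {\<alpha><..<\<beta>} (\<lambda>r. C * (1 / sqrt ((r - \<alpha>) * (\<beta> - r))))"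
    by (rule integral_norm_bound_integral[OF i]) (use g bd in auto)
  then show "\<bar>integral {\<alpha>..\<beta>} \<phi>\<bar> \<le> C * pi"
    using g integral_open_interval_real[of \<alpha> \<beta> \<phi>] integral_unique[OF g] by simp
qed



locale pctx =
  fixes a b J q :: real
  assumes bneg: "b < 0" and apos: "a > 0" and qpos: "q > 0" and q2: "q\<^sup>2 < a / 3"
    and Jdef: "J = q * (q\<^sup>2 - a) / b"
begin

definition "S = (q\<^sup>2 - a) / b"
definition "s0 = -2 * q\<^sup>2 / b"
definition "sm = (s0 + S) / 2"
definition "Ep = Eplus a b q"
definition "PP E s = E * s - J\<^sup>2 / 2 - a * s\<^sup>2 / 2 - b * s ^ 3 / 4"

lemma s0pos: "s0 > 0" using bneg qpos by (simp add: s0_def divide_pos_neg)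
lemma s0S: "s0 < S"
proof -
  have "-2 * q\<^sup>2 > q\<^sup>2 - a" using q2 by simp
  from divide_strict_right_mono_neg[OF this bneg] show ?thesis unfolding s0_def S_def by simp
qed
lemma Spos: "S > 0" using s0pos s0S by simp
lemma sm_bds: "s0 < sm" "sm < S" using s0S by (auto simp: sm_def)

lemma PEp: "PP Ep s = (-b/4) * (s - S)\<^sup>2 * (s - s0)"
  using bneg unfolding PP_def unfolding Ep_def Eplus_def S_def s0_def Jdef
  by (simp add: field_simps power2_eq_square power3_eq_cube)

lemma PE: "PP E s = PP Ep s - (Ep - E) * s"
  unfolding PP_def by (simp add: algebra_simps)

lemma EV: "r > 0 \<Longrightarrow> E - VJ a b J r = PP E (r\<^sup>2) / r\<^sup>2"
  unfolding PP_def VJ_def by (simp add: field_simps power2_eq_square) (simp add: algebra_simps eval_nat_numeral)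

definition "eps0 = PP Ep sm / sm"

lemma eps0pos: "eps0 > 0"
proof -
  have "PP Ep sm > 0" unfolding PEp using sm_bds bneg by (simp add: mult_neg_pos)
  then show ?thesis using sm_bds s0pos unfolding eps0_def by simp
qed

lemma D0lem: "PP E s - (s - s1) * (s - s2) * (-b* s/4 - a/2 - b*(s1+s2)/4)
  = (E + b* s1* s2/4 + (s1+s2)*(-2*a - b*(s1+s2))/4) * s + (-J\<^sup>2/2 - s1* s2*(-2*a - b*(s1+s2))/4)"
  unfolding PP_def by (simp add: algebra_simps power2_eq_square power3_eq_cube divide_simps)

lemma struct_lem:
  assumes e1: "0 < Ep - E" and e2: "Ep - E < eps0"
  obtains s1 s2 s3 where "s0 < s1" "s1 < sm" "sm < s2" "s2 < S" "S < s3"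
    "\<And>s. PP E s = (-b/4) * (s - s1) * (s - s2) * (s - s3)"
    "r1 a b J E = sqrt s1" "r2 a b J E = sqrt s2"
proof -
  have cont: "continuous_on X (PP E)" for X unfolding PP_def by (intro continuous_intros) auto
  have v0: "PP E s0 < 0" using PE[of E s0] PEp[of s0] e1 s0pos by simp
  have vm: "PP E sm > 0"
  proof -
    have "(Ep - E) * sm < eps0 * sm" using e2 sm_bds s0pos by simp
    then show ?thesis using PE[of E sm] sm_bds s0pos by (simp add: eps0_def)
  qed
  have vS: "PP E S < 0" using PE[of E S] PEp[of S] e1 Spos by simp
  obtain s1 where s1: "s0 \<le> s1" "s1 \<le> sm" "PP E s1 = 0"
    using IVT'[of "PP E" s0 0 sm] v0 vm sm_bds cont by auto
  obtain s2 where s2: "sm \<le> s2" "s2 \<le> S" "PP E s2 = 0"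
    using IVT2'[of "PP E" S 0 sm] vS vm sm_bds cont by auto
  have s1s: "s0 < s1" "s1 < sm" using s1 v0 vm by (auto simp: order.order_iff_strict)
  have s2s: "sm < s2" "s2 < S" using s2 vS vm by (auto simp: order.order_iff_strict)
  define s3 where "s3 = -2*a/b - s1 - s2"
  have h3: "-b/4 * (s - s3) = -b* s/4 - a/2 - b*(s1+s2)/4" for s
    using bneg by (simp add: s3_def field_simps)
  define \<alpha> where "\<alpha> = E + b* s1* s2/4 + (s1+s2)*(-2*a - b*(s1+s2))/4"
  define \<beta> where "\<beta> = -J\<^sup>2/2 - s1* s2*(-2*a - b*(s1+s2))/4"
  have D0: "PP E s - (s - s1) * (s - s2) * (-b* s/4 - a/2 - b*(s1+s2)/4) = \<alpha> * s + \<beta>" for s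
    unfolding \<alpha>_def \<beta>_def by (rule D0lem)
  have D: "PP E s - (-b/4) * (s - s1) * (s - s2) * (s - s3) = \<alpha> * s + \<beta>" for s
  proof -
    have "(-b/4) * (s - s1) * (s - s2) * (s - s3) = (s - s1) * (s - s2) * (-b/4 * (s - s3))"
      by (simp only: mult_ac)
    also have "\<dots> = (s - s1) * (s - s2) * (-b* s/4 - a/2 - b*(s1+s2)/4)" by (simp only: h3)
    finally have X: "(-b/4) * (s - s1) * (s - s2) * (s - s3) = (s - s1) * (s - s2) * (-b* s/4 - a/2 - b*(s1+s2)/4)" .
    show ?thesis unfolding X by (rule D0)
  qed
  have "\<alpha> * s1 + \<beta> = 0" "\<alpha> * s2 + \<beta> = 0" using D[of s1] D[of s2] s1 s2 by auto
  then have "\<alpha> * (s1 - s2) = 0" unfolding right_diff_distrib by linarith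
  then have a0: "\<alpha> = 0" using s1s s2s by simp
  then have b0: "\<beta> = 0" using \<open>\<alpha> * s1 + \<beta> = 0\<close> by simp
  have fac: "PP E s = (-b/4) * (s - s1) * (s - s2) * (s - s3)" for s using D[of s] a0 b0 by simp
  have s3S: "S < s3"
  proof (rule ccontr)
    assume "\<not> S < s3"
    then have "(-b/4) * (S - s1) * (S - s2) * (S - s3) \<ge> 0"
      using s1s s2s bneg sm_bds by (intro mult_nonneg_nonneg) auto
    then show False using vS fac[of S] by simp
  qed
  have pos: "0 < s1" "0 < s2" "0 < s3" using s1s s2s s3S s0pos sm_bds Spos by auto
  have rts: "roots a b J E = {sqrt s1, sqrt s2, sqrt s3}"
  proof (intro set_eqI iffI)
    fix r assume "r \<in> roots a b J E"
    then have r: "r > 0" "PP E (r\<^sup>2) = 0" using EV[of r E] by (auto simp: roots_def)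
    then have "(r\<^sup>2 - s1) * (r\<^sup>2 - s2) * (r\<^sup>2 - s3) = 0" using fac[of "r\<^sup>2"] bneg by simp
    then have "r\<^sup>2 = s1 \<or> r\<^sup>2 = s2 \<or> r\<^sup>2 = s3" by auto
    then show "r \<in> {sqrt s1, sqrt s2, sqrt s3}" using r(1) by auto
  next
    fix r assume "r \<in> {sqrt s1, sqrt s2, sqrt s3}"
    then have r: "r > 0" "r\<^sup>2 = s1 \<or> r\<^sup>2 = s2 \<or> r\<^sup>2 = s3" using pos by auto
    then have "PP E (r\<^sup>2) = 0" using fac[of "r\<^sup>2"] by auto
    then show "r \<in> roots a b J E" using EV[of r E] r(1) by (simp add: roots_def)
  qed
  have o: "sqrt s1 < sqrt s2" "sqrt s2 < sqrt s3" using s1s s2s s3S by auto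
  have R1: "r1 a b J E = sqrt s1" unfolding r1_def rts
    by (rule Min_eqI) (use o in auto)
  have R2: "r2 a b J E = sqrt s2" unfolding r2_def R1 rts
    by (rule Min_eqI) (use o in auto)
  show ?thesis using that s1s s2s s3S fac R1 R2 by blast
qed

end



lemma sqrt_bd:
  fixes A w c x :: real
  assumes "A > 0" "w > 0" "c \<ge> 0" "x\<^sup>2 * w \<le> c\<^sup>2 * (2*A)"
  shows "\<bar>x\<bar> / sqrt (2*A) \<le> c / sqrt w"
proof -
  have "\<bar>x\<bar> / sqrt (2*A) = sqrt (x\<^sup>2 / (2*A))" by (simp add: real_sqrt_divide)
  also have "\<dots> \<le> sqrt (c\<^sup>2 / w)"
    using assms by (intro real_sqrt_le_mono) (simp add: divide_simps mult.commute)
  also have "\<dots> = c / sqrt w" using assms by (simp add: real_sqrt_divide)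
  finally show ?thesis .
qed

context pctx begin

definition "Kc = -b * s0 / S"
definition "kc = sqrt (-2 * b * S)"
definition "C2 = sqrt (S / (2 * Kc))"

lemma Kc_pos: "Kc > 0" using bneg s0pos Spos by (simp add: Kc_def divide_neg_pos mult_neg_pos)
lemma kc_pos: "kc > 0" using bneg Spos by (simp add: kc_def mult_neg_pos)

lemma pointwise:
  assumes fac: "\<And>s. PP E s = (-b/4) * (s - s1) * (s - s2) * (s - s3)"
    and o: "s0 < s1" "s1 < s2" "s2 < S" "S < s3" "E < Ep"
    and r: "sqrt s1 < r" "r < sqrt s2"
  shows "E - VJ a b J r > 0"
    "E - VJ a b J r \<ge> Kc * ((r - sqrt s1) * (sqrt s2 - r)) * (S - r\<^sup>2)"
    "E - VJ a b J r \<le> -b * S * (sqrt S - r)\<^sup>2"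
proof -
  have s1p: "s1 > 0" using o s0pos by simp
  have rp: "r > 0" using r s1p by (smt (verit) real_sqrt_ge_zero)
  have r2: "s1 < r\<^sup>2" "r\<^sup>2 < s2"
  proof -
    have sr: "sqrt (r\<^sup>2) = r" using rp by simp
    have "sqrt s1 < sqrt (r\<^sup>2)" "sqrt (r\<^sup>2) < sqrt s2" using r sr by auto
    then show "s1 < r\<^sup>2" "r\<^sup>2 < s2" by (simp_all only: real_sqrt_less_iff)
  qed
  have eq: "E - VJ a b J r = (-b/4) * ((r\<^sup>2 - s1) * (s2 - r\<^sup>2) * (s3 - r\<^sup>2)) / r\<^sup>2"
  proof -
    have "E - VJ a b J r = PP E (r\<^sup>2) / r\<^sup>2" by (rule EV[OF rp])
    also have "PP E (r\<^sup>2) = (-b/4) * ((r\<^sup>2 - s1) * (s2 - r\<^sup>2) * (s3 - r\<^sup>2))"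
      unfolding fac by (simp add: algebra_simps divide_simps)
    finally show ?thesis .
  qed
  have f1: "r\<^sup>2 - s1 \<ge> 2 * sqrt s0 * (r - sqrt s1)"
  proof -
    have "r\<^sup>2 - s1 = (r - sqrt s1) * (r + sqrt s1)" using s1p by (simp add: algebra_simps power2_eq_square)
    moreover have "r + sqrt s1 \<ge> 2 * sqrt s0" using o r by (smt (verit) real_sqrt_less_iff)
    moreover have "r - sqrt s1 > 0" using r by simp
    ultimately show ?thesis by (simp add: mult.commute mult_left_mono)
  qed
  have f2: "s2 - r\<^sup>2 \<ge> 2 * sqrt s0 * (sqrt s2 - r)"
  proof -
    have "s2 - r\<^sup>2 = (sqrt s2 - r) * (sqrt s2 + r)" using o s1p by (simp add: algebra_simps power2_eq_square)
    moreover have "sqrt s2 + r \<ge> 2 * sqrt s0" using o r by (smt (verit) real_sqrt_less_iff)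
    moreover have "sqrt s2 - r > 0" using r by simp
    ultimately show ?thesis by (simp add: mult.commute mult_left_mono)
  qed
  have f3: "s3 - r\<^sup>2 \<ge> S - r\<^sup>2" using o by simp
  have p1: "r\<^sup>2 - s1 > 0" "s2 - r\<^sup>2 > 0" "S - r\<^sup>2 > 0" using r2 o by auto
  have prodpos: "(r\<^sup>2 - s1) * (s2 - r\<^sup>2) * (s3 - r\<^sup>2) > 0" using p1 f3 by simp
  show "E - VJ a b J r > 0" unfolding eq using prodpos bneg rp by (simp add: mult_neg_pos divide_neg_pos)
  have M: "(2 * sqrt s0 * (r - sqrt s1)) * (2 * sqrt s0 * (sqrt s2 - r)) * (S - r\<^sup>2)
        \<le> (r\<^sup>2 - s1) * (s2 - r\<^sup>2) * (s3 - r\<^sup>2)"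
    using f1 f2 f3 p1 r s0pos by (intro mult_mono) auto
  have Q: "(2 * sqrt s0 * (r - sqrt s1)) * (2 * sqrt s0 * (sqrt s2 - r)) * (S - r\<^sup>2)
       = 4 * s0 * ((r - sqrt s1) * (sqrt s2 - r)) * (S - r\<^sup>2)"
  proof -
    have ss: "sqrt s0 * sqrt s0 = s0" using s0pos by simp
    have "(2 * sqrt s0 * (r - sqrt s1)) * (2 * sqrt s0 * (sqrt s2 - r)) * (S - r\<^sup>2)
       = 4 * (sqrt s0 * sqrt s0) * ((r - sqrt s1) * (sqrt s2 - r)) * (S - r\<^sup>2)" by (simp only: mult_ac)
    then show ?thesis unfolding ss .
  qed
  have L: "4 * s0 * ((r - sqrt s1) * (sqrt s2 - r)) * (S - r\<^sup>2) \<le> (r\<^sup>2 - s1) * (s2 - r\<^sup>2) * (s3 - r\<^sup>2)"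
    using M unfolding Q .
  have "Kc * ((r - sqrt s1) * (sqrt s2 - r)) * (S - r\<^sup>2) = (-b/4) * (4 * s0 * ((r - sqrt s1) * (sqrt s2 - r)) * (S - r\<^sup>2)) / S"
    using Spos by (simp add: Kc_def field_simps)
  also have "\<dots> \<le> (-b/4) * ((r\<^sup>2 - s1) * (s2 - r\<^sup>2) * (s3 - r\<^sup>2)) / S"
    using L bneg Spos by (intro divide_right_mono mult_left_mono) auto
  also have "\<dots> \<le> (-b/4) * ((r\<^sup>2 - s1) * (s2 - r\<^sup>2) * (s3 - r\<^sup>2)) / r\<^sup>2"
    using prodpos bneg rp p1 Spos by (intro divide_left_mono) (auto simp: mult_pos_pos mult_nonpos_nonneg less_imp_le)
  finally show "E - VJ a b J r \<ge> Kc * ((r - sqrt s1) * (sqrt s2 - r)) * (S - r\<^sup>2)" unfolding eq .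
  have "E - VJ a b J r = PP E (r\<^sup>2) / r\<^sup>2" using EV[OF rp] .
  also have "\<dots> \<le> PP Ep (r\<^sup>2) / r\<^sup>2" using PE[of E "r\<^sup>2"] o rp by (intro divide_right_mono) auto
  also have "\<dots> = (-b/4) * (S - r\<^sup>2)\<^sup>2 * ((r\<^sup>2 - s0) / r\<^sup>2)" unfolding PEp by (simp add: power2_commute)
  also have "\<dots> \<le> (-b/4) * (S - r\<^sup>2)\<^sup>2 * 1"
    using bneg o r2 rp s0pos by (intro mult_left_mono) (auto simp: divide_simps mult_nonpos_nonneg)
  also have "\<dots> \<le> (-b/4) * (4 * S * (sqrt S - r)\<^sup>2)"
  proof -
    have "S - r\<^sup>2 = (sqrt S - r) * (sqrt S + r)" using Spos by (simp add: algebra_simps power2_eq_square)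
    then have "(S - r\<^sup>2)\<^sup>2 = (sqrt S - r)\<^sup>2 * (sqrt S + r)\<^sup>2" by (simp add: power_mult_distrib)
    moreover have "(sqrt S + r)\<^sup>2 \<le> (2 * sqrt S)\<^sup>2"
    proof (rule power_mono)
      have "sqrt s2 < sqrt S" using o by simp
      then show "sqrt S + r \<le> 2 * sqrt S" using r by linarith
      show "0 \<le> sqrt S + r" using rp Spos by simp
    qed
    ultimately have "(S - r\<^sup>2)\<^sup>2 \<le> (sqrt S - r)\<^sup>2 * (2 * sqrt S)\<^sup>2" by (simp add: mult_left_mono)
    also have "\<dots> = 4 * S * (sqrt S - r)\<^sup>2" using Spos by (simp add: power_mult_distrib)
    finally show ?thesis using bneg by (simp add: mult_left_mono)
  qed
  finally show "E - VJ a b J r \<le> -b * S * (sqrt S - r)\<^sup>2" by simp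
qed

end



context pctx begin

lemma cVJ: "continuous_on {x<..<y} (VJ a b J)" if "0 \<le> x" for x y
proof -
  have "continuous_on {x<..<y} (\<lambda>r. J\<^sup>2 / (2 * r\<^sup>2) + a * r\<^sup>2 / 2 + b * r ^ 4 / 4)"
    using that by (intro continuous_intros) auto
  then show ?thesis unfolding VJ_def[abs_def] by simp
qed

lemma main_est:
  assumes e1: "0 < Ep - E" and e2: "Ep - E < eps0"
  shows "period a b J E \<ge> 2 / kc * (ln (sqrt S - sqrt sm) - ln (sqrt S - r2 a b J E))"
    "\<bar>mass a b J E - S / 2 * period a b J E\<bar> \<le> C2 * pi"
    "sqrt sm < r2 a b J E" "r2 a b J E < sqrt S"
proof -
  obtain s1 s2 s3 where o: "s0 < s1" "s1 < sm" "sm < s2" "s2 < S" "S < s3"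
    and fac: "\<And>s. PP E s = (-b/4) * (s - s1) * (s - s2) * (s - s3)"
    and R1: "r1 a b J E = sqrt s1" and R2: "r2 a b J E = sqrt s2"
    using struct_lem[OF e1 e2] by blast
  have oo: "s0 < s1" "s1 < s2" "s2 < S" "S < s3" "E < Ep" using o e1 by auto
  define \<alpha> where "\<alpha> = sqrt s1"
  define \<beta> where "\<beta> = sqrt s2"
  define rm where "rm = sqrt sm"
  define R where "R = sqrt S"
  have s1p: "s1 > 0" using o s0pos by simp
  have ab: "\<alpha> < rm" "rm < \<beta>" "\<beta> < R" "0 < \<alpha>" using o s1p by (auto simp: \<alpha>_def \<beta>_def rm_def R_def)
  define f where "f r = 1 / sqrt (2 * (E - VJ a b J r))" for r
  define g where "g r = (r\<^sup>2 - S) / sqrt (2 * (E - VJ a b J r))" for r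
  have A: "E - VJ a b J r > 0" "E - VJ a b J r \<ge> Kc * ((r - \<alpha>) * (\<beta> - r)) * (S - r\<^sup>2)"
     "E - VJ a b J r \<le> -b * S * (R - r)\<^sup>2" if "\<alpha> < r" "r < \<beta>" for r
    using pointwise[OF fac oo, of r] that by (auto simp: \<alpha>_def \<beta>_def R_def)
  have rsq: "r\<^sup>2 < s2" if "\<alpha> < r" "r < \<beta>" for r
  proof -
    have "sqrt (r\<^sup>2) < sqrt s2" using that ab by (simp add: \<beta>_def)
    then show ?thesis by (simp only: real_sqrt_less_iff)
  qed
  have cA: "continuous_on {\<alpha><..<\<beta>} (VJ a b J)" using cVJ ab by simp
  have Apos: "\<forall>r\<in>{\<alpha><..<\<beta>}. sqrt (2 * (E - VJ a b J r)) \<noteq> 0"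
  proof
    fix r assume "r \<in> {\<alpha><..<\<beta>}"
    then have "E - VJ a b J r > 0" using A(1) by auto
    then show "sqrt (2 * (E - VJ a b J r)) \<noteq> 0" by simp
  qed
  have cf: "continuous_on {\<alpha><..<\<beta>} f" unfolding f_def
    by (intro continuous_intros cA Apos)
  have cg: "continuous_on {\<alpha><..<\<beta>} g" unfolding g_def
    by (intro continuous_intros cA Apos)
  define C1 where "C1 = sqrt (1 / (2 * Kc * (S - s2)))"
  have bf: "\<bar>f r\<bar> \<le> C1 / sqrt ((r - \<alpha>) * (\<beta> - r))" if r: "\<alpha> < r" "r < \<beta>" for r
  proof -
    have w: "(r - \<alpha>) * (\<beta> - r) > 0" using r by simp
    have "Kc * ((r - \<alpha>) * (\<beta> - r)) * (S - s2) \<le> Kc * ((r - \<alpha>) * (\<beta> - r)) * (S - r\<^sup>2)"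
      using rsq[OF r] Kc_pos w by (intro mult_left_mono) auto
    then have "Kc * ((r - \<alpha>) * (\<beta> - r)) * (S - s2) \<le> E - VJ a b J r" using A(2)[OF r] by linarith
    then have "1\<^sup>2 * ((r - \<alpha>) * (\<beta> - r)) \<le> C1\<^sup>2 * (2 * (E - VJ a b J r))"
      using Kc_pos oo by (simp add: C1_def field_simps)
    moreover have "C1 \<ge> 0" using Kc_pos oo by (simp add: C1_def)
    ultimately have "\<bar>1\<bar> / sqrt (2 * (E - VJ a b J r)) \<le> C1 / sqrt ((r - \<alpha>) * (\<beta> - r))"
      using sqrt_bd[OF A(1)[OF r] w] by blast
    then show ?thesis using A(1)[OF r] by (simp add: f_def)
  qed
  have bg: "\<bar>g r\<bar> \<le> C2 / sqrt ((r - \<alpha>) * (\<beta> - r))" if r: "\<alpha> < r" "r < \<beta>" for r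
  proof -
    have w: "(r - \<alpha>) * (\<beta> - r) > 0" using r by simp
    have r2S: "r\<^sup>2 < S" using rsq[OF r] oo by simp
    have "(r\<^sup>2 - S)\<^sup>2 * ((r - \<alpha>) * (\<beta> - r)) \<le> S * ((S - r\<^sup>2) * ((r - \<alpha>) * (\<beta> - r)))"
    proof -
      have "(r\<^sup>2 - S)\<^sup>2 = (S - r\<^sup>2) * (S - r\<^sup>2)" by (simp add: power2_eq_square algebra_simps)
      moreover have "(S - r\<^sup>2) * (S - r\<^sup>2) \<le> S * (S - r\<^sup>2)" 
        by (rule mult_right_mono) (use r2S in auto)
      then have "((S - r\<^sup>2) * (S - r\<^sup>2)) * ((r - \<alpha>) * (\<beta> - r)) \<le> (S * (S - r\<^sup>2)) * ((r - \<alpha>) * (\<beta> - r))"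
        using w by (rule mult_right_mono[OF _ less_imp_le])
      ultimately show ?thesis by (simp only: mult.assoc)
    qed
    also have "\<dots> \<le> S * ((E - VJ a b J r) / Kc)"
      using A(2)[OF r] Kc_pos Spos by (intro mult_left_mono) (auto simp: field_simps)
    also have "\<dots> = C2\<^sup>2 * (2 * (E - VJ a b J r))" using Kc_pos Spos by (simp add: C2_def field_simps)
    finally have "(r\<^sup>2 - S)\<^sup>2 * ((r - \<alpha>) * (\<beta> - r)) \<le> C2\<^sup>2 * (2 * (E - VJ a b J r))" .
    moreover have "C2 \<ge> 0" using Kc_pos Spos by (simp add: C2_def field_simps)
    ultimately have "\<bar>r\<^sup>2 - S\<bar> / sqrt (2 * (E - VJ a b J r)) \<le> C2 / sqrt ((r - \<alpha>) * (\<beta> - r))"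
      using sqrt_bd[OF A(1)[OF r] w] by blast
    then show ?thesis using A(1)[OF r] by (simp add: g_def abs_div)
  qed
  have fi: "f integrable_on {\<alpha>..\<beta>}" using dominated_int(1)[OF _ cf bf] ab by auto
  have gi: "g integrable_on {\<alpha>..\<beta>}" using dominated_int(1)[OF _ cg bg] ab by auto
  have gb: "\<bar>integral {\<alpha>..\<beta>} g\<bar> \<le> C2 * pi" using dominated_int(2)[OF _ cg bg] ab by auto
  have per: "period a b J E = 2 * integral {\<alpha>..\<beta>} f"
    unfolding period_def R1 R2 \<alpha>_def \<beta>_def f_def ..
  have meq: "(\<lambda>r. r\<^sup>2 / sqrt (2 * (E - VJ a b J r))) = (\<lambda>r. g r + S * f r)"
    by (rule ext) (simp add: g_def f_def diff_divide_distrib)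
  have mas: "mass a b J E = integral {\<alpha>..\<beta>} g + S * integral {\<alpha>..\<beta>} f"
    unfolding mass_def R1 R2 \<alpha>_def[symmetric] \<beta>_def[symmetric] meq
    using integral_add[OF gi integrable_on_cmult_right[OF fi, of S]] by (simp add: mult.commute)
  show "\<bar>mass a b J E - S / 2 * period a b J E\<bar> \<le> C2 * pi"
    using gb unfolding mas per by simp
  show "sqrt sm < r2 a b J E" "r2 a b J E < sqrt S" using ab by (auto simp: R2 \<beta>_def rm_def R_def)
  define h where "h r = 1 / (kc * (R - r))" for r
  have hi: "(h has_integral (ln (R - rm) - ln (R - \<beta>)) / kc) {rm..\<beta>}"
  proof -
    define F where "F r = - ln (R - r) / kc" for r
    have "(h has_integral (F \<beta> - F rm)) {rm..\<beta>}"
    proof (rule fundamental_theorem_of_calculus)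
      show "rm \<le> \<beta>" using ab by simp
      fix x assume x: "x \<in> {rm..\<beta>}"
      then have xR: "R - x > 0" using ab by auto
      have "(F has_real_derivative h x) (at x)" unfolding F_def h_def
        using xR kc_pos by (auto intro!: derivative_eq_intros simp: field_simps)
      then show "(F has_vector_derivative h x) (at x within {rm..\<beta>})"
        by (simp add: has_real_derivative_iff_has_vector_derivative has_vector_derivative_at_within)
    qed
    moreover have "F \<beta> - F rm = (ln (R - rm) - ln (R - \<beta>)) / kc" by (simp add: F_def diff_divide_distrib)
    ultimately show ?thesis by simp
  qed
  have fi2: "f integrable_on {rm..\<beta>}" using integrable_on_subinterval[OF fi] ab by auto
  have Ea: "E - VJ a b J \<alpha> = 0" using EV[of \<alpha> E] fac[of s1] ab s1p by (simp add: \<alpha>_def)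
  have Eb: "E - VJ a b J \<beta> = 0" using EV[of \<beta> E] fac[of s2] ab o s1p by (simp add: \<beta>_def)
  have f0: "0 \<le> f r" if "r \<in> {\<alpha>..\<beta>}" for r
  proof (cases "r = \<alpha> \<or> r = \<beta>")
    case True then show ?thesis using Ea Eb by (auto simp: f_def)
  next
    case False then have "\<alpha> < r" "r < \<beta>" using that by auto
    then have "E - VJ a b J r > 0" by (rule A(1))
    then show ?thesis by (simp add: f_def)
  qed
  have "integral {rm..\<beta>} f \<le> integral {\<alpha>..\<beta>} f"
    using integral_subset_le[OF _ fi2 fi] f0 ab by auto
  moreover have "(ln (R - rm) - ln (R - \<beta>)) / kc \<le> integral {rm..\<beta>} f"
  proof -
    have "integral {rm<..<\<beta>} h \<le> integral {rm<..<\<beta>} f"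
    proof (rule integral_le)
      show "h integrable_on {rm<..<\<beta>}" using hi integrable_on_Icc_iff_Ioo by blast
      show "f integrable_on {rm<..<\<beta>}" using fi2 integrable_on_Icc_iff_Ioo by blast
      fix r assume r: "r \<in> {rm<..<\<beta>}"
      then have r': "\<alpha> < r" "r < \<beta>" using ab by auto
      have Rr: "R - r > 0" using r ab by auto
      have "2 * (E - VJ a b J r) \<le> (kc * (R - r))\<^sup>2"
        using A(3)[OF r'] kc_pos bneg Spos by (simp add: kc_def power_mult_distrib)
      then have "sqrt (2 * (E - VJ a b J r)) \<le> kc * (R - r)"
        using kc_pos Rr by (metis abs_of_pos mult_pos_pos real_sqrt_abs real_sqrt_le_mono)
      moreover have "sqrt (2 * (E - VJ a b J r)) > 0" using A(1)[OF r'] by simp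
      ultimately show "h r \<le> f r" unfolding h_def f_def
        using kc_pos Rr by (intro divide_left_mono) (auto intro!: mult_pos_pos)
    qed
    then show ?thesis using integral_unique[OF hi] hi integral_open_interval_real
      by (metis has_integral_Icc_iff_Ioo integral_unique)
  qed
  ultimately have I: "(ln (R - rm) - ln (R - \<beta>)) / kc \<le> integral {\<alpha>..\<beta>} f" by linarith
  have "2 / kc * (ln (R - rm) - ln (R - \<beta>)) = 2 * ((ln (R - rm) - ln (R - \<beta>)) / kc)" by simp
  also have "\<dots> \<le> 2 * integral {\<alpha>..\<beta>} f" using I by (rule mult_left_mono) simp
  finally show "period a b J E \<ge> 2 / kc * (ln (sqrt S - sqrt sm) - ln (sqrt S - r2 a b J E))"
    unfolding per R2 by (simp add: \<beta>_def rm_def R_def)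
qed

end



context pctx begin

definition "epsd d = -b/4 * d\<^sup>2 * (sm - s0) / S"

lemma epsd_pos: "d > 0 \<Longrightarrow> epsd d > 0"
  using bneg sm_bds Spos unfolding epsd_def by (intro divide_pos_pos mult_pos_pos) auto

lemma r2_close:
  assumes e1: "0 < Ep - E" and e2: "Ep - E < eps0" and d: "d > 0" and e3: "Ep - E < epsd d"
  shows "S - (r2 a b J E)\<^sup>2 < d"
proof -
  obtain s1 s2 s3 where o: "s0 < s1" "s1 < sm" "sm < s2" "s2 < S" "S < s3"
    and fac: "\<And>s. PP E s = (-b/4) * (s - s1) * (s - s2) * (s - s3)"
    and R2: "r2 a b J E = sqrt s2"
    using struct_lem[OF e1 e2] by blast
  have z: "PP E s2 = 0" using fac[of s2] by simp
  have s2p: "s2 > 0" using o s0pos by simp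
  show ?thesis
  proof (rule ccontr)
    assume "\<not> ?thesis"
    then have le: "s2 \<le> S - d" using s2p by (simp add: R2)
    have "d\<^sup>2 \<le> (s2 - S)\<^sup>2"
    proof -
      have "d\<^sup>2 \<le> (S - s2)\<^sup>2" using le d by (intro power_mono) auto
      then show ?thesis by (simp add: power2_commute)
    qed
    then have "d\<^sup>2 * (sm - s0) \<le> (s2 - S)\<^sup>2 * (s2 - s0)"
      using o by (intro mult_mono) auto
    then have "(-b/4) * (d\<^sup>2 * (sm - s0)) \<le> (-b/4) * ((s2 - S)\<^sup>2 * (s2 - s0))"
      using bneg by (intro mult_left_mono) auto
    then have P1: "(-b/4) * d\<^sup>2 * (sm - s0) \<le> PP Ep s2" unfolding PEp by (simp add: mult.assoc)
    have "(Ep - E) * s2 < epsd d * S"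
      using e1 e3 o s2p by (intro mult_strict_mono) auto
    also have "\<dots> = (-b/4) * d\<^sup>2 * (sm - s0)" using Spos by (simp add: epsd_def)
    finally have "PP E s2 > 0" using P1 PE[of E s2] by linarith
    then show False using z by simp
  qed
qed

lemma T_inf: "filterlim (\<lambda>E. period a b J E) at_top (at_left Ep)"
  unfolding filterlim_at_top
proof
  fix Z :: real
  define R where "R = sqrt S"
  define rm where "rm = sqrt sm"
  have Rrm: "rm < R" using sm_bds by (simp add: R_def rm_def)
  define d where "d = R * (R - rm) * exp (- Z * kc / 2)"
  have Rp: "R > 0" using Spos by (simp add: R_def)
  have dp: "d > 0" using Rp Rrm by (simp add: d_def)
  define m where "m = min eps0 (epsd d)"
  have mp: "m > 0" using eps0pos epsd_pos[OF dp] by (simp add: m_def)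
  have ev: "eventually (\<lambda>E. E \<in> {Ep - m<..<Ep}) (at_left Ep)"
    using mp by (intro eventually_at_left_real) simp
  show "eventually (\<lambda>E. Z \<le> period a b J E) (at_left Ep)"
  proof (rule eventually_mono[OF ev])
    fix E assume E: "E \<in> {Ep - m<..<Ep}"
    then have e1: "0 < Ep - E" and e2: "Ep - E < eps0" and e3: "Ep - E < epsd d"
      by (auto simp: m_def)
    note M = main_est[OF e1 e2]
    define r where "r = r2 a b J E"
    have rr: "rm < r" "r < R" using M(3,4) by (auto simp: r_def rm_def R_def)
    have cl: "S - r\<^sup>2 < d" using r2_close[OF e1 e2 dp e3] by (simp add: r_def)
    have "rm > 0" using sm_bds s0pos by (simp add: rm_def)
    then have "(R - r) * R \<le> (R - r) * (R + r)" using rr Rp by (intro mult_left_mono) auto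
    also have "\<dots> = S - r\<^sup>2" using Spos by (simp add: R_def algebra_simps power2_eq_square)
    finally have "(R - r) * R < d" using cl by linarith
    then have Rr: "R - r < d / R" using Rp by (simp add: field_simps)
    have "ln (R - r) < ln (d / R)" using Rr rr by (intro ln_less_cancel_iff[THEN iffD2]) auto
    also have "ln (d / R) = ln (R - rm) - Z * kc / 2"
      using Rp Rrm by (simp add: d_def ln_mult ln_div)
    finally have "Z * kc / 2 < ln (R - rm) - ln (R - r)" by simp
    then have "Z < 2 / kc * (ln (R - rm) - ln (R - r))" using kc_pos by (simp add: field_simps)
    then show "Z \<le> period a b J E" using M(1) by (simp add: r_def rm_def R_def)
  qed
qed

lemma final:
  "filterlim (\<lambda>E. period a b J E) at_top (at_left Ep)
    \<and> filterlim (\<lambda>E. mass a b J E) at_top (at_left Ep)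
    \<and> ((\<lambda>E. mass a b J E / period a b J E) \<longlongrightarrow> S / 2) (at_left Ep)
    \<and> filterlim (\<lambda>E. momentum a b J E) at_top (at_left Ep)
    \<and> ((\<lambda>E. momentum a b J E / period a b J E) \<longlongrightarrow> J / 2) (at_left Ep)"
proof -
  have ev0: "eventually (\<lambda>E. E \<in> {Ep - eps0<..<Ep}) (at_left Ep)"
    using eps0pos by (intro eventually_at_left_real) simp
  have evB: "eventually (\<lambda>E. \<bar>mass a b J E - S / 2 * period a b J E\<bar> \<le> C2 * pi) (at_left Ep)"
    by (rule eventually_mono[OF ev0]) (intro main_est(2), auto)
  have evT: "eventually (\<lambda>E. Z \<le> period a b J E) (at_left Ep)" for Z
    using T_inf unfolding filterlim_at_top by blast
  have "q * (q\<^sup>2 - a) < 0" using qpos q2 apos by (intro mult_pos_neg) auto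
  then have Jp: "J > 0" using Jdef bneg by (simp add: divide_neg_neg)
  have m_inf: "filterlim (\<lambda>E. mass a b J E) at_top (at_left Ep)"
    unfolding filterlim_at_top
  proof
    fix Z
    show "eventually (\<lambda>E. Z \<le> mass a b J E) (at_left Ep)"
      using eventually_conj[OF evB evT[of "2 * (Z + C2 * pi) / S"]]
    proof (rule eventually_mono)
      fix E assume a: "\<bar>mass a b J E - S / 2 * period a b J E\<bar> \<le> C2 * pi \<and> 2 * (Z + C2 * pi) / S \<le> period a b J E"
      then have "S / 2 * (2 * (Z + C2 * pi) / S) \<le> S / 2 * period a b J E"
        using Spos by (intro mult_left_mono) auto
      then have "Z + C2 * pi \<le> S / 2 * period a b J E" using Spos by simp
      then show "Z \<le> mass a b J E" using a by linarith
    qed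
  qed
  have p_inf: "filterlim (\<lambda>E. momentum a b J E) at_top (at_left Ep)"
    unfolding filterlim_at_top
  proof
    fix Z
    show "eventually (\<lambda>E. Z \<le> momentum a b J E) (at_left Ep)"
    proof (rule eventually_mono[OF evT[of "2 * Z / J"]])
      fix E assume "2 * Z / J \<le> period a b J E"
      then have "2 * Z / J * J \<le> period a b J E * J" using Jp by (intro mult_right_mono) auto
      then show "Z \<le> momentum a b J E" using Jp by (simp add: momentum_def)
    qed
  qed
  have evpos: "eventually (\<lambda>E. 0 < period a b J E) (at_left Ep)"
    by (rule eventually_mono[OF evT[of 1]]) simp
  have lim1: "((\<lambda>E. mass a b J E / period a b J E) \<longlongrightarrow> S / 2) (at_left Ep)"
  proof (rule LIM_zero_cancel, rule Lim_null_comparison)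
    show "eventually (\<lambda>E. norm (mass a b J E / period a b J E - S / 2) \<le> C2 * pi / period a b J E) (at_left Ep)"
      using eventually_conj[OF evB evpos]
    proof (rule eventually_mono)
      fix E assume a: "\<bar>mass a b J E - S / 2 * period a b J E\<bar> \<le> C2 * pi \<and> 0 < period a b J E"
      then have "mass a b J E / period a b J E - S / 2 = (mass a b J E - S / 2 * period a b J E) / period a b J E"
        by (simp add: field_simps)
      then show "norm (mass a b J E / period a b J E - S / 2) \<le> C2 * pi / period a b J E"
        using a by (simp add: abs_div divide_right_mono)
    qed
    show "((\<lambda>E. C2 * pi / period a b J E) \<longlongrightarrow> 0) (at_left Ep)"
      by (rule tendsto_divide_0[OF tendsto_const filterlim_at_top_imp_at_infinity[OF T_inf]])
  qed
  have lim2: "((\<lambda>E. momentum a b J E / period a b J E) \<longlongrightarrow> J / 2) (at_left Ep)"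
    by (rule tendsto_eventually, rule eventually_mono[OF evpos]) (simp add: momentum_def)
  show ?thesis using T_inf m_inf lim1 p_inf lim2 by blast
qed

end

theorem proposition2:
  fixes a b J q :: real
  assumes "b < 0" and "a > 0"
    and "0 < J" and "J < sqrt (4 / 27 * a ^ 3 / b\<^sup>2)"
    and "q > 0" and "q\<^sup>2 < a / 3" and "J = q * (q\<^sup>2 - a) / b"
  shows "filterlim (\<lambda>E. period a b J E) at_top (at_left (Eplus a b q))
    \<and> filterlim (\<lambda>E. mass a b J E) at_top (at_left (Eplus a b q))
    \<and> ((\<lambda>E. mass a b J E / period a b J E) \<longlongrightarrow> (q\<^sup>2 - a) / (2 * b))
           (at_left (Eplus a b q))
    \<and> filterlim (\<lambda>E. momentum a b J E) at_top (at_left (Eplus a b q))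
    \<and> ((\<lambda>E. momentum a b J E / period a b J E) \<longlongrightarrow> q * (q\<^sup>2 - a) / (2 * b))
           (at_left (Eplus a b q))"
proof -
  interpret pctx a b J q using assms by unfold_locales auto
  have e1: "S / 2 = (q\<^sup>2 - a) / (2 * b)" by (simp add: S_def)
  have e2: "J / 2 = q * (q\<^sup>2 - a) / (2 * b)" using assms(7) by simp
  show ?thesis using final unfolding e1 e2 Ep_def .
qed


end
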